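(* Let $N$ be an even integer. Then: (1) if $N \geq 6$, $f(N,\frac{N}{2}) = \frac{N^2}{4}+3$; (2) if $N \geq 10$, $f(N,\frac{N}{2}+1) > f(N,\frac{N}{2})$.
   Context: All graphs are finite and simple; $L(G)$ is the line graph of $G$; $e(\cdot)$, $\Delta(\cdot)$, $\delta(\cdot)$ denote number of edges, maximum degree and minimum degree. For integers $N \ge \Delta \ge 1$, $f(N,\Delta) = \max\{ e(L(G)) : e(G)=N, \Delta(G)=\Delta, \delta(G)\geq 1\}$, the maximum over all simple graphs $G$. *)

theory Defs
  imports Main
begin

text \<open>A finite simple graph without isolated vertices is represented by its edge set:
  a finite set of 2-element vertex sets; its vertex set is the union of its edges
  (this encodes the condition minimum degree at least 1). Vertices are natural numbers;
  every finite graph is isomorphic to one on natural numbers.\<close>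

definition simple_graph :: "nat set set \<Rightarrow> bool" where
  "simple_graph E \<longleftrightarrow> finite E \<and> (\<forall>e\<in>E. card e = 2)"

definition verts :: "nat set set \<Rightarrow> nat set" where
  "verts E = \<Union>E"

definition degree :: "nat set set \<Rightarrow> nat \<Rightarrow> nat" where
  "degree E v = card {e\<in>E. v \<in> e}"

definition max_degree :: "nat set set \<Rightarrow> nat" where
  "max_degree E = Max (degree E ` verts E)"

definition min_degree :: "nat set set \<Rightarrow> nat" where
  "min_degree E = Min (degree E ` verts E)"

definition line_graph_edges :: "nat set set \<Rightarrow> nat" where
  "line_graph_edges E = card {{e1, e2} | e1 e2. e1 \<in> E \<and> e2 \<in> E \<and> e1 \<noteq> e2 \<and> e1 \<inter> e2 \<noteq> {}}"

definition f :: "nat \<Rightarrow> nat \<Rightarrow> nat" where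
  "f N D = Max {line_graph_edges E | E. simple_graph E \<and> card E = N \<and> max_degree E = D
                                        \<and> min_degree E \<ge> 1}"

end

theory Submission
  imports Defs
begin


lemma two_choose: "2 * (n choose 2) = n * (n - 1)"
proof -
  have "even (n * (n - 1))" by (cases "even n") auto
  then show ?thesis unfolding choose_two by (rule dvd_mult_div_cancel)
qed

lemma handshake:
  assumes "simple_graph F" "finite W" "verts F \<subseteq> W"
  shows "(\<Sum>v\<in>W. degree F v) = 2 * card F"
proof -
  have fF: "finite F" using assms(1) by (simp add: simple_graph_def)
  have "(\<Sum>v\<in>W. degree F v) = (\<Sum>v\<in>W. \<Sum>e\<in>F. if v \<in> e then 1 else (0::nat))"
    unfolding degree_def using fF by (simp add: sum.If_cases Int_def)
  also have "\<dots> = (\<Sum>e\<in>F. \<Sum>v\<in>W. if v \<in> e then 1 else (0::nat))"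
    by (rule sum.swap)
  also have "\<dots> = (\<Sum>e\<in>F. card (W \<inter> e))"
    using assms(2) by (simp add: sum.If_cases)
  also have "\<dots> = (\<Sum>e\<in>F. 2)"
  proof (rule sum.cong)
    fix e assume "e \<in> F"
    then have "e \<subseteq> W" "card e = 2" using assms by (auto simp: verts_def simple_graph_def)
    then show "card (W \<inter> e) = 2" by (simp add: Int_absorb1)
  qed simp
  finally show ?thesis by simp
qed

lemma lg_sum:
  assumes "simple_graph F" "finite W" "verts F \<subseteq> W"
  shows "line_graph_edges F = (\<Sum>v\<in>W. degree F v choose 2)"
proof -
  have fF: "finite F" and c2: "\<And>e. e \<in> F \<Longrightarrow> card e = 2"
    using assms(1) by (auto simp: simple_graph_def)
  define P where "P v = {X. X \<subseteq> {e\<in>F. v \<in> e} \<and> card X = 2}" for v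
  have eq: "{{e1, e2} | e1 e2. e1 \<in> F \<and> e2 \<in> F \<and> e1 \<noteq> e2 \<and> e1 \<inter> e2 \<noteq> {}} = (\<Union>v\<in>W. P v)"
  proof (rule set_eqI, rule iffI)
    fix X assume "X \<in> {{e1, e2} | e1 e2. e1 \<in> F \<and> e2 \<in> F \<and> e1 \<noteq> e2 \<and> e1 \<inter> e2 \<noteq> {}}"
    then obtain e1 e2 where X: "X = {e1,e2}" "e1 \<in> F" "e2 \<in> F" "e1 \<noteq> e2" "e1 \<inter> e2 \<noteq> {}" by blast
    then obtain v where v: "v \<in> e1" "v \<in> e2" by blast
    have "v \<in> W" using assms(3) X v by (auto simp: verts_def)
    moreover have "X \<in> P v" using X v by (auto simp: P_def)
    ultimately show "X \<in> (\<Union>v\<in>W. P v)" by blast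
  next
    fix X assume "X \<in> (\<Union>v\<in>W. P v)"
    then obtain v where "X \<subseteq> {e\<in>F. v \<in> e}" "card X = 2" by (auto simp: P_def)
    then obtain e1 e2 where "X = {e1,e2}" "e1 \<noteq> e2" "e1 \<in> F" "e2 \<in> F" "v \<in> e1" "v \<in> e2"
      by (auto simp: card_2_iff)
    then show "X \<in> {{e1, e2} | e1 e2. e1 \<in> F \<and> e2 \<in> F \<and> e1 \<noteq> e2 \<and> e1 \<inter> e2 \<noteq> {}}" by blast
  qed
  have disj: "\<forall>v\<in>W. \<forall>w\<in>W. v \<noteq> w \<longrightarrow> P v \<inter> P w = {}"
  proof (intro ballI impI)
    fix v w :: nat assume "v \<in> W" "w \<in> W" and vw: "v \<noteq> w"
    show "P v \<inter> P w = {}"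
    proof (rule ccontr)
      assume "P v \<inter> P w \<noteq> {}"
      then obtain X where "X \<subseteq> {e\<in>F. v \<in> e}" "X \<subseteq> {e\<in>F. w \<in> e}" "card X = 2" by (auto simp: P_def)
      then obtain e1 e2 where e: "e1 \<noteq> e2" "e1 \<in> F" "e2 \<in> F" "v \<in> e1" "v \<in> e2" "w \<in> e1" "w \<in> e2"
        by (auto simp: card_2_iff)
      have "e1 = {v,w}" using c2[OF e(2)] e vw by (auto simp: card_2_iff)
      moreover have "e2 = {v,w}" using c2[OF e(3)] e vw by (auto simp: card_2_iff)
      ultimately show False using e(1) by simp
    qed
  qed
  have cP: "card (P v) = degree F v choose 2" for v
    unfolding P_def degree_def by (rule n_subsets) (use fF in simp)
  have "line_graph_edges F = card (\<Union>v\<in>W. P v)" unfolding line_graph_edges_def eq ..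
  also have "\<dots> = (\<Sum>v\<in>W. card (P v))"
    by (rule card_UN_disjoint) (use assms(2) fF disj in \<open>auto simp: P_def\<close>)
  finally show ?thesis by (simp add: cP)
qed

lemma lg_le:
  assumes "simple_graph F"
  shows "line_graph_edges F \<le> card F choose 2"
proof -
  have fF: "finite F" using assms by (simp add: simple_graph_def)
  have "{{e1, e2} | e1 e2. e1 \<in> F \<and> e2 \<in> F \<and> e1 \<noteq> e2 \<and> e1 \<inter> e2 \<noteq> {}} \<subseteq> {X. X \<subseteq> F \<and> card X = 2}"
  proof
    fix X assume "X \<in> {{e1, e2} | e1 e2. e1 \<in> F \<and> e2 \<in> F \<and> e1 \<noteq> e2 \<and> e1 \<inter> e2 \<noteq> {}}"
    then obtain e1 e2 where "X = {e1,e2}" "e1 \<in> F" "e2 \<in> F" "e1 \<noteq> e2" by blast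
    then show "X \<in> {X. X \<subseteq> F \<and> card X = 2}" by simp
  qed
  moreover have "finite {X. X \<subseteq> F \<and> card X = 2}" using fF by simp
  ultimately have "line_graph_edges F \<le> card {X. X \<subseteq> F \<and> card X = 2}"
    unfolding line_graph_edges_def by (rule card_mono[rotated])
  also have "\<dots> = card F choose 2" using n_subsets[OF fF] .
  finally show ?thesis .
qed

lemma finite_verts: "simple_graph E \<Longrightarrow> finite (verts E)"
  unfolding simple_graph_def verts_def
  apply (intro finite_Union)
   apply simp
  by (metis card.infinite zero_neq_numeral)

lemma sg_subset: "simple_graph E \<Longrightarrow> F \<subseteq> E \<Longrightarrow> simple_graph F"
  unfolding simple_graph_def by (auto intro: finite_subset)

lemma verts_mono: "F \<subseteq> E \<Longrightarrow> verts F \<subseteq> verts E"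
  unfolding verts_def by auto

lemma lg2_ge:
  assumes sg: "simple_graph E" and S: "S \<subseteq> verts E"
  shows "(\<Sum>v\<in>S. degree E v * (degree E v - 1)) \<le> 2 * line_graph_edges E"
proof -
  have fV: "finite (verts E)" using sg by (rule finite_verts)
  have "2 * line_graph_edges E = (\<Sum>v\<in>verts E. degree E v * (degree E v - 1))"
    using lg_sum[OF sg fV] by (simp add: sum_distrib_left two_choose)
  moreover have "(\<Sum>v\<in>S. degree E v * (degree E v - 1)) \<le> (\<Sum>v\<in>verts E. degree E v * (degree E v - 1))"
    by (rule sum_mono2[OF fV S]) simp
  ultimately show ?thesis by simp
qed

lemma deg_ge:
  assumes "finite E" "X \<subseteq> E" "\<And>e. e \<in> X \<Longrightarrow> v \<in> e"
  shows "card X \<le> degree E v"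
  unfolding degree_def by (rule card_mono) (use assms in auto)

lemma deg_le:
  assumes "finite X" "\<And>e. e \<in> E \<Longrightarrow> v \<in> e \<Longrightarrow> e \<in> X"
  shows "degree E v \<le> card X"
  unfolding degree_def by (rule card_mono) (use assms in auto)

lemma hmono: "(a::nat) \<le> b \<Longrightarrow> a * (a - 1) \<le> b * (b - 1)"
  by (simp add: mult_le_mono)


lemma fin1:
  fixes j u L :: nat
  assumes "L \<le> (u+4+j)*(u+4+j-1) + (u+4)*(u+4-1) + 2*(u+4-1) + (j+1)*(j+1-1) + 8*(j+1)"
  shows "L \<le> 2*(u+4+j)^2+6"
proof -
  have e1: "(u+4+j)*(u+4+j-1) = (u+4+j)*(u+3+j)" by simp
  have e2: "(u+4)*(u+4-1) = (u+4)*(u+3)" by simp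
  have "(u+4+j)*(u+3+j) + (u+4)*(u+3) + 2*(u+3) + (j+1)*j + 8*(j+1) \<le> 2*(u+4+j)^2+6"
    by (simp add: power2_eq_square algebra_simps)
  moreover have e3: "(j+1)*(j+1-1) = (j+1)*j" by simp
  moreover have e4: "2*(u+4-1) = 2*(u+3)" by simp
  ultimately show ?thesis using assms unfolding e1 e2 e3 e4 by linarith
qed

lemma pt:
  fixes a b ye :: nat
  assumes "a \<le> 2" "a = 2 \<Longrightarrow> 1 \<le> ye"
  shows "(a+b)*(a+b-1) \<le> 2*ye + b*(b-1) + 4*b"
proof -
  have "a = 0 \<or> a = 1 \<or> a = 2" using assms(1) by auto
  moreover have "b = 0 \<or> (\<exists>c. b = Suc c)" by (cases b) auto
  ultimately show ?thesis using assms(2) by (auto simp: algebra_simps)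
qed

lemma caseA:
  fixes u L :: nat
  assumes "L \<le> (u+3)*(u+3-1) + 6*(u+3)"
  shows "L \<le> 2*(u+3)^2+6"
proof -
  have "(u+3)*(u+2) + 6*(u+3) \<le> 2*(u+3)^2+6" by (simp add: power2_eq_square algebra_simps)
  then show ?thesis using assms by simp
qed

lemma fin0:
  fixes j u L :: nat
  assumes "L \<le> (u+4+j)*(u+4+j-1) + (u+4)*(u+4-1) + 2*(u+4) + j*(j-1) + 8*j"
  shows "L \<le> 2*(u+4+j)^2+6"
proof -
  have e1: "(u+4+j)*(u+4+j-1) = (u+4+j)*(u+3+j)" by simp
  have e2: "(u+4)*(u+4-1) = (u+4)*(u+3)" by simp
  have e3: "j*(j-1) \<le> j*j" by simp
  have "(u+4+j)*(u+3+j) + (u+4)*(u+3) + 2*(u+4) + j*j + 8*j \<le> 2*(u+4+j)^2+6"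
    by (simp add: power2_eq_square algebra_simps)
  then show ?thesis using assms e1 e2 e3 by linarith
qed

lemma fin_arith:
  fixes k t s al L :: nat
  assumes "4 \<le> t" "t \<le> k" "al \<le> 1" "s + t = k + al"
    and "L \<le> k*(k-1) + t*(t-1) + 2*(t-al) + s*(s-1) + 8*s"
  shows "L \<le> 2*k^2+6"
proof -
  obtain j where kj: "k = t + j" using assms(2) le_Suc_ex by blast
  obtain u where tu: "t = u + 4" using assms(1) le_Suc_ex by (metis add.commute)
  have k': "k = u+4+j" using kj tu by simp
  show ?thesis
  proof (cases "al = 0")
    case True
    then have "s = j" using assms(4) kj by simp
    then show ?thesis using assms(5) True k' tu fin0[of L u j] by simp
  next
    case False
    then have "al = 1" using assms(3) by simp
    then have "s = j + 1" using assms(4) kj by simp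
    then show ?thesis using assms(5) \<open>al = 1\<close> k' tu fin1[of L u j] by simp
  qed
qed

lemma upper:
  assumes sg: "simple_graph E" and cE: "card E = 2*k" and k3: "3 \<le> k"
    and dmax: "\<And>v. v \<in> verts E \<Longrightarrow> degree E v \<le> k"
    and xV: "x \<in> verts E" and dx: "degree E x = k"
  shows "line_graph_edges E \<le> k^2 + 3"
proof -
  define V where "V = verts E"
  have fE: "finite E" and c2: "\<And>e. e \<in> E \<Longrightarrow> card e = 2" using sg by (auto simp: simple_graph_def)
  have fV: "finite V" unfolding V_def using sg by (rule finite_verts)
  have xV': "x \<in> V" using xV V_def by simp
  define d where "d v = degree E v" for v
  have sumd: "(\<Sum>v\<in>V. d v) = 4*k" using handshake[OF sg fV] cE by (simp add: V_def d_def)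
  have lg2: "2 * line_graph_edges E = (\<Sum>v\<in>V. d v * (d v - 1))"
    using lg_sum[OF sg fV] by (simp add: V_def d_def sum_distrib_left two_choose)
  have dxk: "d x = k" using dx by (simp add: d_def)
  show ?thesis
  proof (cases "\<forall>v\<in>V-{x}. d v \<le> 3")
    case True
    have s1: "(\<Sum>v\<in>V. d v * (d v - 1)) = k*(k-1) + (\<Sum>v\<in>V-{x}. d v * (d v - 1))"
      using sum.remove[OF fV xV', of "\<lambda>v. d v * (d v - 1)"] dxk by simp
    have s2: "(\<Sum>v\<in>V-{x}. d v * (d v - 1)) \<le> (\<Sum>v\<in>V-{x}. 2 * d v)"
    proof (rule sum_mono)
      fix v assume "v \<in> V-{x}"
      then have "d v \<le> 3" using True by blast
      then have "d v - 1 \<le> 2" by simp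
      then have "d v * (d v - 1) \<le> d v * 2" by (rule mult_le_mono2)
      then show "d v * (d v - 1) \<le> 2 * d v" by (simp add: mult.commute)
    qed
    have s3: "(\<Sum>v\<in>V-{x}. d v) = 3*k" using sum.remove[OF fV xV', of d] sumd dxk by simp
    have s4: "(\<Sum>v\<in>V-{x}. 2 * d v) = 6 * k" using s3 by (simp add: sum_distrib_left[symmetric])
    have "2 * line_graph_edges E \<le> k*(k-1) + 6*k" using lg2 s1 s2 s4 by linarith
    moreover obtain u where "k = u + 3" using k3 le_Suc_ex by (metis add.commute)
    ultimately have "2 * line_graph_edges E \<le> 2*k^2+6" using caseA[of "2 * line_graph_edges E" u] by simp
    then show ?thesis by simp
  next
    case False
    then obtain y where yV0: "y \<in> V-{x}" and y3: "\<not> d y \<le> 3" by blast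
    then have yV: "y \<in> V" and yx: "y \<noteq> x" and y4: "4 \<le> d y" by auto
    define t where "t = d y"
    have tk: "t \<le> k" using dmax yV by (simp add: t_def d_def V_def)
    define A where "A = {e\<in>E. x \<in> e \<or> y \<in> e}"
    define B where "B = E - A"
    define Y where "Y = {e\<in>E. y \<in> e}"
    define al where "al = card {e\<in>E. x \<in> e \<and> y \<in> e}"
    have al1: "al \<le> 1"
    proof -
      have "{e\<in>E. x \<in> e \<and> y \<in> e} \<subseteq> {{x,y}}"
      proof
        fix e assume "e \<in> {e\<in>E. x \<in> e \<and> y \<in> e}"
        then have "card e = 2" "x \<in> e" "y \<in> e" using c2 by auto
        then show "e \<in> {{x,y}}" using yx by (auto simp: card_2_iff)
      qed
      from card_mono[OF _ this] show ?thesis unfolding al_def by simp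
    qed
    have cA: "card A + al = k + t"
    proof -
      have "card ({e\<in>E. x \<in> e} \<union> {e\<in>E. y \<in> e}) + card ({e\<in>E. x \<in> e} \<inter> {e\<in>E. y \<in> e}) = card {e\<in>E. x \<in> e} + card {e\<in>E. y \<in> e}"
        by (rule card_Un_Int[symmetric]) (use fE in auto)
      moreover have "{e\<in>E. x \<in> e} \<union> {e\<in>E. y \<in> e} = A" unfolding A_def by auto
      moreover have "{e\<in>E. x \<in> e} \<inter> {e\<in>E. y \<in> e} = {e\<in>E. x \<in> e \<and> y \<in> e}" by auto
      ultimately show ?thesis using dx unfolding al_def t_def d_def degree_def by simp
    qed
    have AE: "A \<subseteq> E" unfolding A_def by auto
    define s where "s = card B"
    have cB: "s + card A = 2*k"
      using card_Diff_subset[OF finite_subset[OF AE fE] AE] card_mono[OF fE AE] cE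
      unfolding s_def B_def by simp
    have st: "s + t = k + al" using cA cB by linarith
    have BE: "B \<subseteq> E" unfolding B_def by auto
    have YE: "Y \<subseteq> E" unfolding Y_def by auto
    have sgB: "simple_graph B" by (rule sg_subset[OF sg BE])
    have sgY: "simple_graph Y" by (rule sg_subset[OF sg YE])
    have vB: "verts B \<subseteq> V" unfolding V_def by (rule verts_mono[OF BE])
    have vY: "verts Y \<subseteq> V" unfolding V_def by (rule verts_mono[OF YE])
    have "{e\<in>B. x \<in> e} = {}" unfolding B_def A_def by auto
    then have bx: "degree B x = 0" unfolding degree_def by (simp only: card.empty)
    have "{e\<in>B. y \<in> e} = {}" unfolding B_def A_def by auto
    then have by0: "degree B y = 0" unfolding degree_def by (simp only: card.empty)
    have sumB: "(\<Sum>v\<in>V. degree B v) = 2*s" using handshake[OF sgB fV vB] s_def by simp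
    have lgB: "(\<Sum>v\<in>V. degree B v * (degree B v - 1)) \<le> s*(s-1)"
    proof -
      have "(\<Sum>v\<in>V. degree B v * (degree B v - 1)) = 2 * line_graph_edges B"
        using lg_sum[OF sgB fV vB] by (simp add: sum_distrib_left two_choose)
      also have "\<dots> \<le> 2 * (s choose 2)" using lg_le[OF sgB] s_def by simp
      also have "\<dots> = s*(s-1)" by (rule two_choose)
      finally show ?thesis .
    qed
    have cY: "card Y = t" unfolding Y_def t_def d_def degree_def ..
    have sumY: "(\<Sum>v\<in>V. degree Y v) = 2*t" using handshake[OF sgY fV vY] cY by simp
    have Yy: "degree Y y = t" using cY unfolding degree_def Y_def by simp
    have "{e\<in>Y. x \<in> e} = {e\<in>E. x \<in> e \<and> y \<in> e}" unfolding Y_def by auto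
    then have Yx: "degree Y x = al" unfolding degree_def al_def by simp
    have yV2: "y \<in> V - {x}" using yV yx by simp
    have split: "(\<Sum>v\<in>V. g v) = g x + g y + (\<Sum>v\<in>V-{x}-{y}. g v)" for g :: "nat \<Rightarrow> nat"
      using sum.remove[OF fV xV', of g] sum.remove[OF _ yV2, of g] fV by simp
    have sY': "(\<Sum>v\<in>V-{x}-{y}. degree Y v) + t + al = 2*t"
      using split[of "degree Y"] sumY Yy Yx by simp
    have sB': "(\<Sum>v\<in>V-{x}-{y}. degree B v) = 2*s"
      using split[of "degree B"] sumB bx by0 by simp
    have lB': "(\<Sum>v\<in>V-{x}-{y}. degree B v * (degree B v - 1)) \<le> s*(s-1)"
      using split[of "\<lambda>v. degree B v * (degree B v - 1)"] lgB bx by0 by simp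
    have pw: "d v * (d v - 1) \<le> 2 * degree Y v + degree B v * (degree B v - 1) + 4 * degree B v"
      if vV: "v \<in> V-{x}-{y}" for v
    proof -
      have vx: "v \<noteq> x" and vy: "v \<noteq> y" using vV by auto
      have dAB: "d v = degree A v + degree B v"
      proof -
        have "{e\<in>E. v \<in> e} = {e\<in>A. v \<in> e} \<union> {e\<in>B. v \<in> e}" unfolding B_def using AE by auto
        moreover have "card ({e\<in>A. v \<in> e} \<union> {e\<in>B. v \<in> e}) = card {e\<in>A. v \<in> e} + card {e\<in>B. v \<in> e}"
          by (rule card_Un_disjoint) (use finite_subset[OF AE fE] finite_subset[OF BE fE] B_def in auto)
        ultimately show ?thesis unfolding d_def degree_def by simp
      qed
      have sub: "{e\<in>A. v \<in> e} \<subseteq> {e. e = {v,x} \<and> e \<in> E} \<union> {e. e = {v,y} \<and> e \<in> E}"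
      proof
        fix e assume "e \<in> {e\<in>A. v \<in> e}"
        then have "e \<in> E" "card e = 2" "v \<in> e" "x \<in> e \<or> y \<in> e" using c2 unfolding A_def by auto
        then show "e \<in> {e. e = {v,x} \<and> e \<in> E} \<union> {e. e = {v,y} \<and> e \<in> E}"
          using vx vy by (auto simp: card_2_iff)
      qed
      have a2: "degree A v \<le> 2"
      proof -
        have "degree A v \<le> card ({e. e = {v,x} \<and> e \<in> E} \<union> {e. e = {v,y} \<and> e \<in> E})"
          unfolding degree_def by (rule card_mono[OF _ sub]) auto
        also have "\<dots> \<le> card {{v,x},{v,y}}" by (rule card_mono) auto
        also have "\<dots> \<le> 2" by (simp add: card_insert_if)
        finally show ?thesis .
      qed
      have a2y: "1 \<le> degree Y v" if "degree A v = 2"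
      proof (rule ccontr)
        assume "\<not> 1 \<le> degree Y v"
        have "{v,y} \<notin> E"
        proof
          assume h: "{v,y} \<in> E"
          have "finite {e \<in> Y. v \<in> e}" using fE unfolding Y_def by simp
          moreover have "{v,y} \<in> {e \<in> Y. v \<in> e}" using h unfolding Y_def by simp
          ultimately have "1 \<le> degree Y v" unfolding degree_def by (auto simp: Suc_le_eq card_gt_0_iff)
          then show False using \<open>\<not> 1 \<le> degree Y v\<close> by simp
        qed
        then have "{e\<in>A. v \<in> e} \<subseteq> {{v,x}}" using sub by auto
        then have "degree A v \<le> 1" unfolding degree_def using card_mono[of "{{v,x}}"] by fastforce
        then show False using that by simp
      qed
      show ?thesis unfolding dAB by (rule pt[OF a2 a2y])
    qed
    have "(\<Sum>v\<in>V-{x}-{y}. d v * (d v - 1)) \<le> (\<Sum>v\<in>V-{x}-{y}. 2 * degree Y v + degree B v * (degree B v - 1) + 4 * degree B v)"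
      by (rule sum_mono) (rule pw)
    also have "\<dots> = 2 * (\<Sum>v\<in>V-{x}-{y}. degree Y v) + (\<Sum>v\<in>V-{x}-{y}. degree B v * (degree B v - 1)) + 4 * (\<Sum>v\<in>V-{x}-{y}. degree B v)"
      by (simp add: sum.distrib sum_distrib_left)
    finally have rest: "(\<Sum>v\<in>V-{x}-{y}. d v * (d v - 1)) \<le> 2*(t - al) + s*(s-1) + 8*s"
      using sY' sB' lB' by linarith
    have "2 * line_graph_edges E = k*(k-1) + t*(t-1) + (\<Sum>v\<in>V-{x}-{y}. d v * (d v - 1))"
      using lg2 split[of "\<lambda>v. d v * (d v - 1)"] dxk t_def by simp
    then have "2 * line_graph_edges E \<le> k*(k-1) + t*(t-1) + 2*(t-al) + s*(s-1) + 8*s"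
      using rest by linarith
    then have "2 * line_graph_edges E \<le> 2*k^2+6"
      by (rule fin_arith[OF y4[folded t_def] tk al1 st])
    then show ?thesis by simp
  qed
qed



definition E1 :: "nat \<Rightarrow> nat set set" where
  "E1 k = insert {0,1} (insert {2,3} ((\<lambda>i. {0,i}) ` {2..k} \<union> (\<lambda>i. {1,i}) ` {2..k}))"
lemma memE1: "e \<in> E1 k \<longleftrightarrow> e = {0,1} \<or> e = {2,3} \<or> (\<exists>i. 2 \<le> i \<and> i \<le> k \<and> e = {0,i}) \<or> (\<exists>i. 2 \<le> i \<and> i \<le> k \<and> e = {1,i})"
  unfolding E1_def by (simp add: image_iff Bex_def conj_assoc)
lemma E1_cases:
  assumes "e \<in> E1 k"
  obtains "e = {0,1}" | "e = {2,3}" | i where "2 \<le> i" "i \<le> k" "e = {0,i}" | i where "2 \<le> i" "i \<le> k" "e = {1,i}"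
  using assms unfolding memE1 by (elim disjE exE conjE) simp_all
lemma d0le: "e \<in> E1 k \<Longrightarrow> 0 \<in> e \<Longrightarrow> e \<in> insert {0,1} ((\<lambda>i. {0,i}) ` {2..k})"
  by (erule E1_cases) auto
lemma d1le: "e \<in> E1 k \<Longrightarrow> 1 \<in> e \<Longrightarrow> e \<in> insert {0,1} ((\<lambda>i. {1,i}) ` {2..k})"
  by (erule E1_cases) auto
lemma dvle: "e \<in> E1 k \<Longrightarrow> v \<in> e \<Longrightarrow> 2 \<le> v \<Longrightarrow> e \<in> {{0,v},{1,v},{2,3}}"
  by (erule E1_cases) auto
lemma vle: "e \<in> E1 k \<Longrightarrow> v \<in> e \<Longrightarrow> 3 \<le> k \<Longrightarrow> v \<le> k"
  by (erule E1_cases) auto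
lemma card_img0: "card ((\<lambda>i. {0::nat,i}) ` {2..k}) = k - 1"
proof -
  have "inj_on (\<lambda>i. {0::nat,i}) {2..k}" by (auto simp: inj_on_def doubleton_eq_iff)
  then show ?thesis by (simp add: card_image)
qed

lemma card_img1: "card ((\<lambda>i. {1::nat,i}) ` {2..k}) = k - 1"
proof -
  have "inj_on (\<lambda>i. {1::nat,i}) {2..k}" by (auto simp: inj_on_def doubleton_eq_iff)
  then show ?thesis by (simp add: card_image)
qed

lemma d01: "(\<lambda>i. {0::nat,i}) ` {2..a} \<inter> (\<lambda>i. {1::nat,i}) ` {2..b} = {}"
proof -
  have "{0::nat,i} \<noteq> {1,j}" if "j \<in> {2..b}" for i j
  proof
    assume "{0::nat,i} = {1,j}"
    then have "(0::nat) \<in> {1,j}" by blast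
    then show False using that by simp
  qed
  then show ?thesis by blast
qed

lemma cUn: "card ((\<lambda>i. {0::nat,i}) ` {2..a} \<union> (\<lambda>i. {1::nat,i}) ` {2..b}) = (a - 1) + (b - 1)"
proof -
  have "card ((\<lambda>i. {0::nat,i}) ` {2..a} \<union> (\<lambda>i. {1::nat,i}) ` {2..b}) = card ((\<lambda>i. {0::nat,i}) ` {2..a}) + card ((\<lambda>i. {1::nat,i}) ` {2..b})"
    by (rule card_Un_disjoint[OF finite_imageI finite_imageI d01]) (rule finite_atLeastAtMost)+
  then show ?thesis by (simp only: card_img0 card_img1)
qed

lemma E1_sg: "simple_graph (E1 k)"
  unfolding simple_graph_def
proof
  show "finite (E1 k)" unfolding E1_def by simp
  show "\<forall>e\<in>E1 k. card e = 2" by (auto elim: E1_cases)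
qed

lemma E1_card: "3 \<le> k \<Longrightarrow> card (E1 k) = 2*k"
proof -
  assume k3: "3 \<le> k"
  have n23: "{2,3} \<notin> (\<lambda>i. {0::nat,i}) ` {2..k} \<union> (\<lambda>i. {1::nat,i}) ` {2..k}" by (simp add: image_iff doubleton_eq_iff)
  have n01: "{0,1} \<notin> insert {2,3} ((\<lambda>i. {0::nat,i}) ` {2..k} \<union> (\<lambda>i. {1::nat,i}) ` {2..k})" by (simp add: image_iff doubleton_eq_iff)
  show ?thesis unfolding E1_def using n23 n01 cUn[of k k] k3 by simp
qed

lemma E1_deg0: "3 \<le> k \<Longrightarrow> degree (E1 k) 0 = k"
proof -
  assume k3: "3 \<le> k"
  have n0: "{0,1} \<notin> (\<lambda>i. {0::nat,i}) ` {2..k}" by (simp add: image_iff doubleton_eq_iff)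
  have c: "card (insert {0,1} ((\<lambda>i. {0::nat,i}) ` {2..k})) = k" using n0 card_img0[of k] k3 by simp
  have "degree (E1 k) 0 \<le> k" using deg_le[of "insert {0,1} ((\<lambda>i. {0::nat,i}) ` {2..k})" "E1 k" 0] d0le c by simp
  moreover have "k \<le> degree (E1 k) 0"
  proof -
    have "insert {0,1} ((\<lambda>i. {0::nat,i}) ` {2..k}) \<subseteq> E1 k" unfolding E1_def
      by (intro insert_mono subset_insertI2 Un_upper1)
    moreover have "finite (E1 k)" using E1_sg unfolding simple_graph_def by simp
    ultimately show ?thesis using deg_ge[of "E1 k" "insert {0,1} ((\<lambda>i. {0::nat,i}) ` {2..k})" 0] c by auto
  qed
  ultimately show ?thesis by simp
qed

lemma E1_deg1: "3 \<le> k \<Longrightarrow> degree (E1 k) 1 = k"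
proof -
  assume k3: "3 \<le> k"
  have n0: "{0,1} \<notin> (\<lambda>i. {1::nat,i}) ` {2..k}" by (simp add: image_iff doubleton_eq_iff)
  have c: "card (insert {0,1} ((\<lambda>i. {1::nat,i}) ` {2..k})) = k" using n0 card_img1[of k] k3 by simp
  have "degree (E1 k) 1 \<le> k" using deg_le[of "insert {0,1} ((\<lambda>i. {1::nat,i}) ` {2..k})" "E1 k" 1] d1le c by simp
  moreover have "k \<le> degree (E1 k) 1"
  proof -
    have "insert {0,1} ((\<lambda>i. {1::nat,i}) ` {2..k}) \<subseteq> E1 k" unfolding E1_def
      by (intro insert_mono subset_insertI2 Un_upper2)
    moreover have "finite (E1 k)" using E1_sg unfolding simple_graph_def by simp
    ultimately show ?thesis using deg_ge[of "E1 k" "insert {0,1} ((\<lambda>i. {1::nat,i}) ` {2..k})" 1] c by auto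
  qed
  ultimately show ?thesis by simp
qed
lemma mem0: "2 \<le> i \<Longrightarrow> i \<le> k \<Longrightarrow> {0,i} \<in> E1 k"
  unfolding E1_def by (intro insertI2 UnI1 imageI) simp
lemma mem1: "2 \<le> i \<Longrightarrow> i \<le> k \<Longrightarrow> {1,i} \<in> E1 k"
  unfolding E1_def by (intro insertI2 UnI2 imageI) simp
lemma mem23: "{2,3} \<in> E1 k"
  unfolding E1_def by (intro insertI2 insertI1)
lemma mem01: "{0,1} \<in> E1 k"
  unfolding E1_def by (intro insertI1)

lemma E1_verts: "3 \<le> k \<Longrightarrow> verts (E1 k) = {0..k}"
proof (rule set_eqI)
  fix v assume k3: "3 \<le> k"
  show "v \<in> verts (E1 k) \<longleftrightarrow> v \<in> {0..k}"
  proof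
    assume "v \<in> verts (E1 k)"
    then obtain e where "e \<in> E1 k" "v \<in> e" unfolding verts_def by blast
    then show "v \<in> {0..k}" using vle k3 by simp
  next
    assume v: "v \<in> {0..k}"
    show "v \<in> verts (E1 k)"
    proof (cases "v \<le> 1")
      case True
      then have "v \<in> {0,1}" by auto
      then show ?thesis using mem01 unfolding verts_def by blast
    next
      case False
      then have "{0,v} \<in> E1 k" using v by (intro mem0) auto
      then show ?thesis unfolding verts_def by blast
    qed
  qed
qed

lemma E1_maxdeg: "3 \<le> k \<Longrightarrow> max_degree (E1 k) = k"
proof -
  assume k3: "3 \<le> k"
  have dle: "degree (E1 k) v \<le> k" for v
  proof (cases "v \<le> 1")
    case True
    then have "v = 0 \<or> v = 1" by auto
    then show ?thesis using E1_deg0[OF k3] E1_deg1[OF k3] by auto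
  next
    case False
    have "degree (E1 k) v \<le> card {{0,v},{1,v},{2,3}}"
      by (rule deg_le) (use False dvle in auto)
    also have "\<dots> \<le> 3" by (simp add: card_insert_if)
    finally show ?thesis using k3 by simp
  qed
  show "max_degree (E1 k) = k" unfolding max_degree_def
  proof (rule Max_eqI)
    show "finite (degree (E1 k) ` verts (E1 k))" unfolding E1_verts[OF k3] by simp
    show "\<And>y. y \<in> degree (E1 k) ` verts (E1 k) \<Longrightarrow> y \<le> k" using dle by blast
    have "0 \<in> verts (E1 k)" unfolding E1_verts[OF k3] by simp
    then show "k \<in> degree (E1 k) ` verts (E1 k)" using E1_deg0[OF k3] by (metis imageI)
  qed
qed

lemma E1_lg: "3 \<le> k \<Longrightarrow> k^2 + 3 \<le> line_graph_edges (E1 k)"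
proof -
  assume k3: "3 \<le> k"
  have fin: "finite (E1 k)" using E1_sg unfolding simple_graph_def by simp
  let ?h = "\<lambda>v. degree (E1 k) v * (degree (E1 k) v - 1)"
  have h2: "2 \<le> ?h v" if "v \<in> {2..k}" for v
  proof -
    have "{{0,v},{1,v}} \<subseteq> E1 k" using that mem0 mem1 by auto
    then have "card {{0,v},{1,v}} \<le> degree (E1 k) v"
      by (rule deg_ge[OF fin]) auto
    then have "2 \<le> degree (E1 k) v" using that by (simp add: doubleton_eq_iff)
    from hmono[OF this] show ?thesis by simp
  qed
  have h3: "6 \<le> ?h v" if "v = 2 \<or> v = 3" for v
  proof -
    have "{{0,v},{1,v},{2,3}} \<subseteq> E1 k" using that k3 mem0 mem1 mem23 by auto
    then have "card {{0,v},{1,v},{2,3}} \<le> degree (E1 k) v"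
      by (rule deg_ge[OF fin]) (use that in auto)
    moreover have "card {{0,v},{1,v},{2,3}} = 3" using that by (auto simp: doubleton_eq_iff card_insert_if)
    ultimately have "3 \<le> degree (E1 k) v" by simp
    from hmono[OF this] show ?thesis by simp
  qed
  have S: "{0,1,2,3} \<union> {4..k} \<subseteq> verts (E1 k)" unfolding E1_verts[OF k3] using k3 by auto
  have "(\<Sum>v\<in>{0,1,2,3} \<union> {4..k}. ?h v) = ?h 0 + ?h 1 + ?h 2 + ?h 3 + (\<Sum>v\<in>{4..k}. ?h v)"
    by (subst sum.union_disjoint) auto
  moreover have "(\<Sum>v\<in>{4..k}. 2) \<le> (\<Sum>v\<in>{4..k}. ?h v)"
    by (rule sum_mono) (use h2 in auto)
  moreover have "?h 0 = k*(k-1)" "?h 1 = k*(k-1)" using E1_deg0[OF k3] E1_deg1[OF k3] by auto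
  moreover have "6 \<le> ?h 2" "6 \<le> ?h 3" using h3 by auto
  ultimately have "k*(k-1) + k*(k-1) + 12 + 2*(k-3) \<le> 2 * line_graph_edges (E1 k)"
    using lg2_ge[OF E1_sg S] by simp
  moreover obtain u where "k = u + 3" using k3 le_Suc_ex by (metis add.commute)
  ultimately show "k^2 + 3 \<le> line_graph_edges (E1 k)" by (simp add: power2_eq_square algebra_simps)
qed
definition E2 :: "nat \<Rightarrow> nat set set" where
  "E2 k = insert {0,1} ((\<lambda>i. {0,i}) ` {2..k+1} \<union> (\<lambda>i. {1,i}) ` {2..k})"

lemma memE2: "e \<in> E2 k \<longleftrightarrow> e = {0,1} \<or> (\<exists>i. 2 \<le> i \<and> i \<le> k+1 \<and> e = {0,i}) \<or> (\<exists>i. 2 \<le> i \<and> i \<le> k \<and> e = {1,i})"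
  unfolding E2_def by (simp add: image_iff Bex_def conj_assoc)

lemma E2_cases:
  assumes "e \<in> E2 k"
  obtains "e = {0,1}" | i where "2 \<le> i" "i \<le> k+1" "e = {0,i}" | i where "2 \<le> i" "i \<le> k" "e = {1,i}"
  using assms unfolding memE2 by (elim disjE exE conjE) simp_all

lemma e2d0le: "e \<in> E2 k \<Longrightarrow> 0 \<in> e \<Longrightarrow> e \<in> insert {0,1} ((\<lambda>i. {0,i}) ` {2..k+1})"
  by (erule E2_cases) auto
lemma e2d1le: "e \<in> E2 k \<Longrightarrow> 1 \<in> e \<Longrightarrow> e \<in> insert {0,1} ((\<lambda>i. {1,i}) ` {2..k})"
  by (erule E2_cases) auto
lemma e2dvle: "e \<in> E2 k \<Longrightarrow> v \<in> e \<Longrightarrow> 2 \<le> v \<Longrightarrow> e \<in> {{0,v},{1,v}}"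
  by (erule E2_cases) auto
lemma e2vle: "e \<in> E2 k \<Longrightarrow> v \<in> e \<Longrightarrow> v \<le> k+1"
  by (erule E2_cases) auto

lemma e2mem0: "2 \<le> i \<Longrightarrow> i \<le> k+1 \<Longrightarrow> {0,i} \<in> E2 k"
  unfolding E2_def by (intro insertI2 UnI1 imageI) simp
lemma e2mem1: "2 \<le> i \<Longrightarrow> i \<le> k \<Longrightarrow> {1,i} \<in> E2 k"
  unfolding E2_def by (intro insertI2 UnI2 imageI) simp
lemma e2mem01: "{0,1} \<in> E2 k"
  unfolding E2_def by (intro insertI1)

lemma E2_sg: "simple_graph (E2 k)"
  unfolding simple_graph_def
proof
  show "finite (E2 k)" unfolding E2_def by simp
  show "\<forall>e\<in>E2 k. card e = 2" by (auto elim: E2_cases)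
qed

lemma E2_card: "5 \<le> k \<Longrightarrow> card (E2 k) = 2*k"
proof -
  assume k5: "5 \<le> k"
  have n01: "{0,1} \<notin> (\<lambda>i. {0::nat,i}) ` {2..k+1} \<union> (\<lambda>i. {1::nat,i}) ` {2..k}" by (simp add: image_iff doubleton_eq_iff)
  show ?thesis unfolding E2_def using n01 cUn[of "k+1" k] k5 by simp
qed

lemma E2_deg0: "5 \<le> k \<Longrightarrow> degree (E2 k) 0 = k + 1"
proof -
  assume k5: "5 \<le> k"
  have n0: "{0,1} \<notin> (\<lambda>i. {0::nat,i}) ` {2..k+1}" by (simp add: image_iff doubleton_eq_iff)
  have c: "card (insert {0,1} ((\<lambda>i. {0::nat,i}) ` {2..k+1})) = k + 1" using n0 card_img0[of "k+1"] k5 by simp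
  have "degree (E2 k) 0 \<le> k + 1" using deg_le[of "insert {0,1} ((\<lambda>i. {0::nat,i}) ` {2..k+1})" "E2 k" 0] e2d0le c by simp
  moreover have "k + 1 \<le> degree (E2 k) 0"
  proof -
    have "insert {0,1} ((\<lambda>i. {0::nat,i}) ` {2..k+1}) \<subseteq> E2 k" unfolding E2_def
      by (intro insert_mono Un_upper1)
    moreover have "finite (E2 k)" using E2_sg unfolding simple_graph_def by simp
    ultimately show ?thesis using deg_ge[of "E2 k" "insert {0,1} ((\<lambda>i. {0::nat,i}) ` {2..k+1})" 0] c by auto
  qed
  ultimately show ?thesis by simp
qed

lemma E2_deg1: "5 \<le> k \<Longrightarrow> degree (E2 k) 1 = k"
proof -
  assume k5: "5 \<le> k"
  have n0: "{0,1} \<notin> (\<lambda>i. {1::nat,i}) ` {2..k}" by (simp add: image_iff doubleton_eq_iff)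
  have c: "card (insert {0,1} ((\<lambda>i. {1::nat,i}) ` {2..k})) = k" using n0 card_img1[of k] k5 by simp
  have "degree (E2 k) 1 \<le> k" using deg_le[of "insert {0,1} ((\<lambda>i. {1::nat,i}) ` {2..k})" "E2 k" 1] e2d1le c by simp
  moreover have "k \<le> degree (E2 k) 1"
  proof -
    have "insert {0,1} ((\<lambda>i. {1::nat,i}) ` {2..k}) \<subseteq> E2 k" unfolding E2_def
      by (intro insert_mono Un_upper2)
    moreover have "finite (E2 k)" using E2_sg unfolding simple_graph_def by simp
    ultimately show ?thesis using deg_ge[of "E2 k" "insert {0,1} ((\<lambda>i. {1::nat,i}) ` {2..k})" 1] c by auto
  qed
  ultimately show ?thesis by simp
qed

lemma E2_verts: "verts (E2 k) = {0..k+1}"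
proof (rule set_eqI)
  fix v
  show "v \<in> verts (E2 k) \<longleftrightarrow> v \<in> {0..k+1}"
  proof
    assume "v \<in> verts (E2 k)"
    then obtain e where "e \<in> E2 k" "v \<in> e" unfolding verts_def by blast
    then show "v \<in> {0..k+1}" using e2vle by simp
  next
    assume v: "v \<in> {0..k+1}"
    show "v \<in> verts (E2 k)"
    proof (cases "v \<le> 1")
      case True
      then have "v \<in> {0,1}" by auto
      then show ?thesis using e2mem01 unfolding verts_def by blast
    next
      case False
      then have "{0,v} \<in> E2 k" using v by (intro e2mem0) auto
      then show ?thesis unfolding verts_def by blast
    qed
  qed
qed

lemma E2_maxdeg: "5 \<le> k \<Longrightarrow> max_degree (E2 k) = k + 1"
proof -
  assume k5: "5 \<le> k"
  have dle: "degree (E2 k) v \<le> k + 1" for v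
  proof (cases "v \<le> 1")
    case True
    then have "v = 0 \<or> v = 1" by auto
    then show ?thesis using E2_deg0[OF k5] E2_deg1[OF k5] by auto
  next
    case False
    have "degree (E2 k) v \<le> card {{0,v},{1,v}}"
      by (rule deg_le) (use False e2dvle in auto)
    also have "\<dots> \<le> 2" by (simp add: card_insert_if)
    finally show ?thesis using k5 by simp
  qed
  show "max_degree (E2 k) = k + 1" unfolding max_degree_def
  proof (rule Max_eqI)
    show "finite (degree (E2 k) ` verts (E2 k))" unfolding E2_verts by simp
    show "\<And>y. y \<in> degree (E2 k) ` verts (E2 k) \<Longrightarrow> y \<le> k + 1" using dle by blast
    have "0 \<in> verts (E2 k)" unfolding E2_verts by simp
    then show "k + 1 \<in> degree (E2 k) ` verts (E2 k)" using E2_deg0[OF k5] by (metis imageI)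
  qed
qed

lemma E2_lg: "5 \<le> k \<Longrightarrow> k^2 + 3 < line_graph_edges (E2 k)"
proof -
  assume k5: "5 \<le> k"
  have fin: "finite (E2 k)" using E2_sg unfolding simple_graph_def by simp
  let ?h = "\<lambda>v. degree (E2 k) v * (degree (E2 k) v - 1)"
  have h2: "2 \<le> ?h v" if "v \<in> {2..k}" for v
  proof -
    have "{{0,v},{1,v}} \<subseteq> E2 k" using that e2mem0 e2mem1 by auto
    then have "card {{0,v},{1,v}} \<le> degree (E2 k) v"
      by (rule deg_ge[OF fin]) auto
    then have "2 \<le> degree (E2 k) v" using that by (simp add: doubleton_eq_iff)
    from hmono[OF this] show ?thesis by simp
  qed
  have S: "{0,1} \<union> {2..k} \<subseteq> verts (E2 k)" unfolding E2_verts by auto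
  have "(\<Sum>v\<in>{0,1} \<union> {2..k}. ?h v) = ?h 0 + ?h 1 + (\<Sum>v\<in>{2..k}. ?h v)"
    by (subst sum.union_disjoint) auto
  moreover have "(\<Sum>v\<in>{2..k}. 2) \<le> (\<Sum>v\<in>{2..k}. ?h v)"
    by (rule sum_mono) (use h2 in auto)
  moreover have "?h 0 = (k+1)*k" "?h 1 = k*(k-1)" using E2_deg0[OF k5] E2_deg1[OF k5] by auto
  ultimately have "(k+1)*k + k*(k-1) + 2*(k-1) \<le> 2 * line_graph_edges (E2 k)"
    using lg2_ge[OF E2_sg S] by simp
  moreover obtain u where "k = u + 5" using k5 le_Suc_ex by (metis add.commute)
  ultimately show "k^2 + 3 < line_graph_edges (E2 k)" by (simp add: power2_eq_square algebra_simps)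
qed


lemma verts_ne: "simple_graph E \<Longrightarrow> E \<noteq> {} \<Longrightarrow> verts E \<noteq> {}"
proof -
  assume sg: "simple_graph E" and ne: "E \<noteq> {}"
  then obtain e where e: "e \<in> E" by blast
  then have "card e = 2" using sg unfolding simple_graph_def by blast
  then obtain a b where "e = {a,b}" by (auto simp: card_2_iff)
  then show ?thesis using e unfolding verts_def by blast
qed

lemma min_deg_ge1:
  assumes sg: "simple_graph E" and ne: "E \<noteq> {}"
  shows "1 \<le> min_degree E"
proof -
  have fV: "finite (verts E)" using sg by (rule finite_verts)
  have "Min (degree E ` verts E) \<in> degree E ` verts E"
    by (rule Min_in) (use fV verts_ne[OF sg ne] in auto)
  then obtain v where v: "v \<in> verts E" "min_degree E = degree E v" unfolding min_degree_def by auto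
  then obtain e where e: "e \<in> E" "v \<in> e" unfolding verts_def by blast
  have fE: "finite E" using sg unfolding simple_graph_def by blast
  have "finite {e\<in>E. v \<in> e}" using fE by simp
  moreover have "e \<in> {e\<in>E. v \<in> e}" using e by simp
  ultimately have "1 \<le> card {e\<in>E. v \<in> e}" by (auto simp: Suc_le_eq card_gt_0_iff)
  then show ?thesis using v unfolding degree_def by simp
qed

lemma f_set_fin: "finite {line_graph_edges E | E. simple_graph E \<and> card E = N \<and> max_degree E = D \<and> min_degree E \<ge> 1}"
proof (rule finite_subset)
  show "{line_graph_edges E | E. simple_graph E \<and> card E = N \<and> max_degree E = D \<and> min_degree E \<ge> 1} \<subseteq> {..N choose 2}"
  proof
    fix n assume "n \<in> {line_graph_edges E | E. simple_graph E \<and> card E = N \<and> max_degree E = D \<and> min_degree E \<ge> 1}"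
    then obtain E where "n = line_graph_edges E" "simple_graph E" "card E = N" by blast
    then show "n \<in> {..N choose 2}" using lg_le[of E] by simp
  qed
qed simp

lemma f_ge:
  assumes "simple_graph E" "card E = N" "max_degree E = D" "min_degree E \<ge> 1"
  shows "line_graph_edges E \<le> f N D"
proof -
  have "line_graph_edges E \<in> {line_graph_edges E | E. simple_graph E \<and> card E = N \<and> max_degree E = D \<and> min_degree E \<ge> 1}"
    using assms by (intro CollectI exI[of _ E]) simp
  then show ?thesis unfolding f_def by (rule Max_ge[OF f_set_fin])
qed

lemma f_le:
  assumes "\<And>E. simple_graph E \<Longrightarrow> card E = N \<Longrightarrow> max_degree E = D \<Longrightarrow> min_degree E \<ge> 1 \<Longrightarrow> line_graph_edges E \<le> c"
    and "simple_graph E0" "card E0 = N" "max_degree E0 = D" "min_degree E0 \<ge> 1"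
  shows "f N D \<le> c"
proof -
  have "f N D \<in> {line_graph_edges E | E. simple_graph E \<and> card E = N \<and> max_degree E = D \<and> min_degree E \<ge> 1}"
  proof -
    have "line_graph_edges E0 \<in> {line_graph_edges E | E. simple_graph E \<and> card E = N \<and> max_degree E = D \<and> min_degree E \<ge> 1}"
      using assms(2-5) by (intro CollectI exI[of _ E0]) simp
    then have "{line_graph_edges E | E. simple_graph E \<and> card E = N \<and> max_degree E = D \<and> min_degree E \<ge> 1} \<noteq> {}" by blast
    then show ?thesis unfolding f_def by (rule Max_in[OF f_set_fin])
  qed
  then obtain E where "f N D = line_graph_edges E" "simple_graph E" "card E = N" "max_degree E = D" "min_degree E \<ge> 1"
    by blast
  then show ?thesis using assms(1) by simp
qed

lemma part1:
  assumes k3: "3 \<le> k"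
  shows "f (2*k) k = k^2 + 3"
proof (rule antisym)
  have ne: "E1 k \<noteq> {}" using mem01 by blast
  have md: "1 \<le> min_degree (E1 k)" by (rule min_deg_ge1[OF E1_sg ne])
  show "f (2*k) k \<le> k^2 + 3"
  proof (rule f_le[OF _ E1_sg E1_card[OF k3] E1_maxdeg[OF k3] md])
    fix E assume sg: "simple_graph E" and cE: "card E = 2*k" and mx: "max_degree E = k"
    have fV: "finite (verts E)" using sg by (rule finite_verts)
    have neE: "E \<noteq> {}" using cE k3 by auto
    have "Max (degree E ` verts E) \<in> degree E ` verts E"
      by (rule Max_in) (use fV verts_ne[OF sg neE] in auto)
    then obtain x where x: "x \<in> verts E" "degree E x = k" using mx unfolding max_degree_def by auto
    have dmax: "degree E v \<le> k" if "v \<in> verts E" for v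
    proof -
      have "degree E v \<le> Max (degree E ` verts E)" by (rule Max_ge) (use fV that in simp_all)
      then show ?thesis using mx unfolding max_degree_def by simp
    qed
    show "line_graph_edges E \<le> k^2 + 3" by (rule upper[OF sg cE k3 dmax x])
  qed
  show "k^2 + 3 \<le> f (2*k) k"
    using E1_lg[OF k3] f_ge[OF E1_sg E1_card[OF k3] E1_maxdeg[OF k3] md] by linarith
qed

theorem mainTheorem14:
  fixes N :: nat
  assumes "even N"
  shows "(N \<ge> 6 \<longrightarrow> 4 * f N (N div 2) = N^2 + 12)
       \<and> (N \<ge> 10 \<longrightarrow> f N (N div 2 + 1) > f N (N div 2))"
proof -
  obtain k where N: "N = 2*k" using assms by (auto elim: evenE)
  have Nd: "N div 2 = k" using N by simp
  show ?thesis
  proof (intro conjI impI)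
    assume "6 \<le> N"
    then have k3: "3 \<le> k" using N by simp
    show "4 * f N (N div 2) = N^2 + 12" using part1[OF k3] unfolding Nd unfolding N by (simp add: power2_eq_square)
  next
    assume "10 \<le> N"
    then have k5: "5 \<le> k" and k3: "3 \<le> k" using N by simp_all
    have ne: "E2 k \<noteq> {}" using e2mem01 by blast
    have md: "1 \<le> min_degree (E2 k)" by (rule min_deg_ge1[OF E2_sg ne])
    have "line_graph_edges (E2 k) \<le> f (2*k) (k+1)"
      by (rule f_ge[OF E2_sg E2_card[OF k5] E2_maxdeg[OF k5] md])
    then show "f N (N div 2 + 1) > f N (N div 2)" using part1[OF k3] E2_lg[OF k5] unfolding Nd unfolding N by linarith
  qed
qed
end
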